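(* For positive integers $j,k,m,n$ (with all complete graphs and paths below of order at least $2$ and all cycles of length at least $3$), the following hold: 1. $C_{cc}(K_m\boxtimes K_n)=C_{cc}(K_m\circ K_n)=1$. 2. $C_{cc}(K_m\boxtimes C_n)=C_{cc}(K_m\circ C_n)=\lfloor n/2\rfloor$. 3. $C_{cc}(K_m\boxtimes P_n)=C_{cc}(K_m\circ P_n)=\lceil n/2\rceil$. 4. $C_{cc}(C_m\circ C_n)=\lfloor m/2\rfloor\lfloor n/2\rfloor$. 5. $C_{cc}(C_{2j}\boxtimes C_n)=j\lfloor n/2\rfloor$. 6. $C_{cc}(C_{2j+1}\boxtimes C_{2k+1})=jk+\lfloor k/2\rfloor$, when $j\geq k$. 7. $C_{cc}(C_m\boxtimes P_n)=C_{cc}(C_m\circ P_n)=\lfloor m/2\rfloor\lceil n/2\rceil$. 8. $C_{cc}(P_m\boxtimes P_n)=C_{cc}(P_m\circ P_n)=\lceil m/2\rceil\lceil n/2\rceil$.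
   Context: All graphs are finite, simple and undirected. $K_\ell$, $C_\ell$, $P_\ell$ denote the complete graph, cycle and path on $\ell$ vertices. For a graph $G$ and $S\subseteq V(G)$, the cycle interval $\langle S\rangle$ consists of the vertices of $S$ together with every vertex $w\in V(G)\setminus S$ such that $G[S\cup\{w\}]$ contains a cycle through $w$; $S$ is cycle convex if $\langle S\rangle=S$. The cycle convexity number $C_{cc}(G)$ is the maximum cardinality of a proper (i.e. $\neq V(G)$) cycle convex subset of $V(G)$. The strong product $G\boxtimes H$ has vertex set $V(G)\times V(H)$ with $(g_1,h_1)\sim(g_2,h_2)$ iff ($g_1\sim g_2$, $h_1=h_2$) or ($g_1=g_2$, $h_1\sim h_2$) or ($g_1\sim g_2$, $h_1\sim h_2$). The lexicographic product $G\circ H$ has vertex set $V(G)\times V(H)$ with $(g_1,h_1)\sim(g_2,h_2)$ iff $g_1\sim g_2$, or ($g_1=g_2$ and $h_1\sim h_2$). *)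

theory Defs
  imports Main
begin

text \<open>A finite simple graph is represented by a vertex set together with a
symmetric, irreflexive adjacency relation (only meaningful on the vertex set).\<close>

type_synonym 'a graph = "'a set \<times> ('a \<Rightarrow> 'a \<Rightarrow> bool)"

definition verts :: "'a graph \<Rightarrow> 'a set" where
  "verts G = fst G"

definition adj :: "'a graph \<Rightarrow> 'a \<Rightarrow> 'a \<Rightarrow> bool" where
  "adj G = snd G"

definition has_cycle_through :: "'a graph \<Rightarrow> 'a set \<Rightarrow> 'a \<Rightarrow> bool" where
  "has_cycle_through G T w \<longleftrightarrow>
     (\<exists>vs. 3 \<le> length vs \<and> distinct vs \<and> set vs \<subseteq> T \<and> w \<in> set vs \<and>
        (\<forall>i < length vs. adj G (vs ! i) (vs ! ((i + 1) mod length vs))))"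

definition cycle_interval :: "'a graph \<Rightarrow> 'a set \<Rightarrow> 'a set" where
  "cycle_interval G S =
     S \<union> {w \<in> verts G - S. has_cycle_through G (S \<union> {w}) w}"

definition cycle_convex :: "'a graph \<Rightarrow> 'a set \<Rightarrow> bool" where
  "cycle_convex G S \<longleftrightarrow> S \<subseteq> verts G \<and> cycle_interval G S = S"

definition Ccc :: "'a graph \<Rightarrow> nat" where
  "Ccc G = Max {card S | S. S \<subseteq> verts G \<and> S \<noteq> verts G \<and> cycle_convex G S}"

definition Kg :: "nat \<Rightarrow> nat graph" where
  "Kg n = ({0..<n}, \<lambda>a b. a < n \<and> b < n \<and> a \<noteq> b)"

definition Cg :: "nat \<Rightarrow> nat graph" where
  "Cg n = ({0..<n}, \<lambda>a b. a < n \<and> b < n \<and> a \<noteq> b \<and>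
                          (b = (a + 1) mod n \<or> a = (b + 1) mod n))"

definition Pg :: "nat \<Rightarrow> nat graph" where
  "Pg n = ({0..<n}, \<lambda>a b. a < n \<and> b < n \<and> (b = a + 1 \<or> a = b + 1))"

definition strong_prod :: "'a graph \<Rightarrow> 'b graph \<Rightarrow> ('a \<times> 'b) graph" where
  "strong_prod G H = (verts G \<times> verts H,
     \<lambda>(g1, h1) (g2, h2).
        (adj G g1 g2 \<and> h1 = h2) \<or> (g1 = g2 \<and> adj H h1 h2) \<or> (adj G g1 g2 \<and> adj H h1 h2))"

definition lexic_prod :: "'a graph \<Rightarrow> 'b graph \<Rightarrow> ('a \<times> 'b) graph" where
  "lexic_prod G H = (verts G \<times> verts H,
     \<lambda>(g1, h1) (g2, h2). adj G g1 g2 \<or> (g1 = g2 \<and> adj H h1 h2))"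

end

theory Submission
  imports Defs
begin


definition wfg :: "'a graph \<Rightarrow> bool" where
  "wfg G \<longleftrightarrow> (\<forall>a\<in>verts G. \<forall>b\<in>verts G. adj G a b \<longrightarrow> a \<noteq> b \<and> adj G b a)"

definition indep :: "'a graph \<Rightarrow> 'a set \<Rightarrow> bool" where
  "indep G I \<longleftrightarrow> I \<subseteq> verts G \<and> (\<forall>a\<in>I. \<forall>b\<in>I. \<not> adj G a b)"

lemma tri:
  assumes "cycle_convex G S" "w \<in> verts G" "w \<notin> S" "u \<in> S" "v \<in> S"
    "adj G w u" "adj G u v" "adj G v w" "u \<noteq> v"
  shows False
proof -
  have "has_cycle_through G (S \<union> {w}) w"
    unfolding has_cycle_through_def
  proof (rule exI[of _ "[w,u,v]"], intro conjI)
    show "3 \<le> length [w,u,v]" by simp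
    show "distinct [w,u,v]" using assms by auto
    show "set [w,u,v] \<subseteq> S \<union> {w}" using assms by auto
    show "w \<in> set [w,u,v]" by simp
    show "\<forall>i<length [w,u,v]. adj G ([w,u,v] ! i) ([w,u,v] ! ((i + 1) mod length [w,u,v]))"
    proof (intro allI impI)
      fix i assume "i < length [w,u,v]"
      then have "i = 0 \<or> i = 1 \<or> i = 2" by auto
      then show "adj G ([w,u,v] ! i) ([w,u,v] ! ((i + 1) mod length [w,u,v]))"
        using assms by auto
    qed
  qed
  then have "w \<in> cycle_interval G S" unfolding cycle_interval_def using assms by auto
  with assms(1,3) show False unfolding cycle_convex_def by auto
qed

lemma indep_convex:
  assumes "indep G I"
  shows "cycle_convex G I"
proof -
  have "\<not> has_cycle_through G (I \<union> {w}) w" if "w \<notin> I" for w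
  proof
    assume "has_cycle_through G (I \<union> {w}) w"
    then obtain vs where L: "3 \<le> length vs" and d: "distinct vs" and sub: "set vs \<subseteq> I \<union> {w}"
      and wi: "w \<in> set vs" and ad: "\<forall>i < length vs. adj G (vs ! i) (vs ! ((i + 1) mod length vs))"
      unfolding has_cycle_through_def by blast
    define n where "n = length vs"
    obtain p where p: "p < n" "vs ! p = w" using wi unfolding n_def by (auto simp: in_set_conv_nth)
    define i where "i = (p + 1) mod n"
    have i2: "(i + 1) mod n = (p + 2) mod n" unfolding i_def by (simp add: mod_Suc_eq)
    have n3: "3 \<le> n" using L n_def by simp
    have ip: "i \<noteq> p" "i < n"
    proof -
      show "i < n" unfolding i_def using n3 by simp
      show "i \<noteq> p"
      proof (cases "p + 1 < n")
        case True then show ?thesis unfolding i_def by simp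
      next
        case False then have "p + 1 = n" using p by simp
        then show ?thesis unfolding i_def using n3 by simp
      qed
    qed
    have jp: "(p + 2) mod n \<noteq> p" "(p+2) mod n < n"
    proof -
      show "(p+2) mod n < n" using n3 by simp
      show "(p + 2) mod n \<noteq> p"
      proof (cases "p + 2 < n")
        case True then show ?thesis by simp
      next
        case False then have "(p + 2) mod n = p + 2 - n" using p n3
          by (simp add: le_mod_geq)
        then show ?thesis using n3 p False by simp
      qed
    qed
    have a1: "vs ! i \<in> I" using ip p d sub unfolding n_def
      by (metis (no_types, lifting) Un_insert_right insert_iff nth_eq_iff_index_eq nth_mem subsetD sup_bot.right_neutral)
    have a2: "vs ! ((p+2) mod n) \<in> I" using jp p d sub unfolding n_def
      by (metis (no_types, lifting) Un_insert_right insert_iff nth_eq_iff_index_eq nth_mem subsetD sup_bot.right_neutral)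
    have "adj G (vs ! i) (vs ! ((p+2) mod n))" using ad ip i2 unfolding n_def by metis
    then show False using a1 a2 assms unfolding indep_def by blast
  qed
  then show ?thesis using assms unfolding cycle_convex_def cycle_interval_def indep_def by auto
qed

lemma Ccc_eqI:
  assumes wf: "wfg G" and fin: "finite (verts G)"
    and ub: "\<And>S. cycle_convex G S \<Longrightarrow> S \<noteq> verts G \<Longrightarrow> card S \<le> c"
    and I0: "indep G I0" "card I0 = c"
    and edge: "adj G a b" "a \<in> verts G" "b \<in> verts G"
  shows "Ccc G = c"
  unfolding Ccc_def
proof (rule Max_eqI)
  show "finite {card S |S. S \<subseteq> verts G \<and> S \<noteq> verts G \<and> cycle_convex G S}"
  proof -
    have "{card S |S. S \<subseteq> verts G \<and> S \<noteq> verts G \<and> cycle_convex G S} \<subseteq> card ` Pow (verts G)" by auto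
    then show ?thesis using fin by (meson finite_Pow_iff finite_imageI finite_subset)
  qed
  show "y \<le> c" if "y \<in> {card S |S. S \<subseteq> verts G \<and> S \<noteq> verts G \<and> cycle_convex G S}" for y
    using that ub by auto
  have "I0 \<noteq> verts G"
  proof
    assume "I0 = verts G"
    moreover have "a \<in> verts G \<and> b \<in> verts G" using edge by blast
    ultimately show False using I0 edge unfolding indep_def by blast
  qed
  then show "c \<in> {card S |S. S \<subseteq> verts G \<and> S \<noteq> verts G \<and> cycle_convex G S}"
    using I0 indep_convex[OF I0(1)] unfolding indep_def by auto
qed




definition conn :: "'a graph \<Rightarrow> bool" where
  "conn G \<longleftrightarrow> (\<forall>P. (\<exists>g\<in>verts G. P g) \<longrightarrow> (\<forall>a b. adj G a b \<longrightarrow> P a \<longrightarrow> P b) \<longrightarrow> (\<forall>g\<in>verts G. P g))"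

definition good :: "'a graph \<Rightarrow> bool" where
  "good G \<longleftrightarrow> wfg G \<and> (\<forall>a b. adj G a b \<longrightarrow> a \<in> verts G \<and> b \<in> verts G) \<and> finite (verts G) \<and> conn G \<and> (\<forall>g\<in>verts G. \<exists>g'. adj G g g')"

lemma verts_strong[simp]: "verts (strong_prod G H) = verts G \<times> verts H"
  by (simp add: strong_prod_def verts_def)
lemma adj_strong[simp]: "adj (strong_prod G H) (g1,h1) (g2,h2) \<longleftrightarrow>
   (adj G g1 g2 \<and> h1 = h2) \<or> (g1 = g2 \<and> adj H h1 h2) \<or> (adj G g1 g2 \<and> adj H h1 h2)"
  by (simp add: strong_prod_def adj_def)
lemma verts_lex[simp]: "verts (lexic_prod G H) = verts G \<times> verts H"
  by (simp add: lexic_prod_def verts_def)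
lemma adj_lex[simp]: "adj (lexic_prod G H) (g1,h1) (g2,h2) \<longleftrightarrow> adj G g1 g2 \<or> (g1 = g2 \<and> adj H h1 h2)"
  by (simp add: lexic_prod_def adj_def)

lemma wfg_strong: assumes "wfg G" "wfg H" shows "wfg (strong_prod G H)"
  unfolding wfg_def
proof (intro ballI impI)
  fix p q assume p: "p \<in> verts (strong_prod G H)" and q: "q \<in> verts (strong_prod G H)"
    and a: "adj (strong_prod G H) p q"
  obtain g1 h1 g2 h2 where pq: "p = (g1,h1)" "q = (g2,h2)" by (cases p, cases q)
  have "g1 \<in> verts G" "g2 \<in> verts G" "h1 \<in> verts H" "h2 \<in> verts H" using p q pq by auto
  moreover have "adj G g1 g2 \<Longrightarrow> g1 \<noteq> g2 \<and> adj G g2 g1" "adj H h1 h2 \<Longrightarrow> h1 \<noteq> h2 \<and> adj H h2 h1"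
    using calculation assms unfolding wfg_def by blast+
  ultimately show "p \<noteq> q \<and> adj (strong_prod G H) q p" using a unfolding pq adj_strong by auto
qed
lemma wfg_lex: assumes "wfg G" "wfg H" shows "wfg (lexic_prod G H)"
  unfolding wfg_def
proof (intro ballI impI)
  fix p q assume p: "p \<in> verts (lexic_prod G H)" and q: "q \<in> verts (lexic_prod G H)"
    and a: "adj (lexic_prod G H) p q"
  obtain g1 h1 g2 h2 where pq: "p = (g1,h1)" "q = (g2,h2)" by (cases p, cases q)
  have "g1 \<in> verts G" "g2 \<in> verts G" "h1 \<in> verts H" "h2 \<in> verts H" using p q pq by auto
  moreover have "adj G g1 g2 \<Longrightarrow> g1 \<noteq> g2 \<and> adj G g2 g1" "adj H h1 h2 \<Longrightarrow> h1 \<noteq> h2 \<and> adj H h2 h1"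
    using calculation assms unfolding wfg_def by blast+
  ultimately show "p \<noteq> q \<and> adj (lexic_prod G H) q p" using a unfolding pq adj_lex by auto
qed

lemma convex_sub: "cycle_convex G S \<Longrightarrow> S \<subseteq> verts G"
  unfolding cycle_convex_def by simp

lemma tri_closed:
  assumes "wfg G" "cycle_convex G S" "w \<in> verts G" "u \<in> S" "v \<in> S"
    "adj G w u" "adj G w v" "adj G u v"
  shows "w \<in> S"
proof (rule ccontr)
  assume "w \<notin> S"
  moreover have uv: "u \<in> verts G" "v \<in> verts G" using assms(2,4,5) unfolding cycle_convex_def by auto
  moreover have "adj G v w" using assms(1,3,7) uv unfolding wfg_def by blast
  moreover have "u \<noteq> v" using assms(1,8) uv unfolding wfg_def by blast
  ultimately show False using tri[OF assms(2,3) _ assms(4,5,6,8)] by blast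
qed

lemma closure:
  fixes G :: "'a graph" and H :: "'b graph" and \<Gamma> :: "('a \<times> 'b) graph"
  assumes wf: "wfg \<Gamma>" and V: "verts \<Gamma> = verts G \<times> verts H"
    and sup: "\<And>g1 h1 g2 h2. adj (strong_prod G H) (g1,h1) (g2,h2) \<Longrightarrow> adj \<Gamma> (g1,h1) (g2,h2)"
    and gG: "good G" and gH: "good H" and cv: "cycle_convex \<Gamma> S"
    and s1: "(g,h) \<in> S" and s2: "(g,h') \<in> S" and hh: "adj H h h'"
  shows "S = verts \<Gamma>"
proof -
  note cl = tri_closed[OF wf cv]
  have wG: "wfg G" and wH: "wfg H" using gG gH unfolding good_def by auto
  have inG: "a \<in> verts G" "b \<in> verts G" if "adj G a b" for a b using gG that unfolding good_def by blast+
  have inH: "a \<in> verts H" "b \<in> verts H" if "adj H a b" for a b using gH that unfolding good_def by blast+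
  have symG: "adj G b a" if "adj G a b" for a b using wG that inG[OF that] unfolding wfg_def by blast
  have symH: "adj H b a" if "adj H a b" for a b using wH that inH[OF that] unfolding wfg_def by blast
  have e1: "adj \<Gamma> (x,y) (x',y)" if "adj G x x'" for x x' y using sup that by simp
  have e2: "adj \<Gamma> (x,y) (x,y')" if "adj H y y'" for x y y' using sup that by simp
  have e3: "adj \<Gamma> (x,y) (x',y')" if "adj G x x'" "adj H y y'" for x x' y y' using sup that by simp
  have gV: "g \<in> verts G" using s1 convex_sub[OF cv] V by auto
  have stepA: "\<forall>x\<in>verts G. (x,h) \<in> S \<and> (x,h') \<in> S"
  proof -
    have "conn G" using gG unfolding good_def by simp
    then have R: "(\<exists>g\<in>verts G. P g) \<Longrightarrow> (\<forall>a b. adj G a b \<longrightarrow> P a \<longrightarrow> P b) \<Longrightarrow> (\<forall>g\<in>verts G. P g)" for P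
      unfolding conn_def by blast
    show ?thesis
    proof (rule R)
      show "\<exists>g\<in>verts G. (g,h) \<in> S \<and> (g,h') \<in> S" using gV s1 s2 by blast
      show "\<forall>a b. adj G a b \<longrightarrow> (a, h) \<in> S \<and> (a, h') \<in> S \<longrightarrow> (b, h) \<in> S \<and> (b, h') \<in> S"
      proof (intro allI impI conjI)
        fix a b assume ab: "adj G a b" and P: "(a, h) \<in> S \<and> (a, h') \<in> S"
        show "(b,h) \<in> S"
        proof (rule cl[of _ "(a,h)" "(a,h')"])
          show "(b,h) \<in> verts \<Gamma>" using V inG[OF ab] inH[OF hh] by simp
          show "(a,h) \<in> S" "(a,h') \<in> S" using P by auto
          show "adj \<Gamma> (b,h) (a,h)" using e1 symG ab by blast
          show "adj \<Gamma> (b,h) (a,h')" using e3 symG ab hh by blast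
          show "adj \<Gamma> (a,h) (a,h')" using e2 hh by blast
        qed
        show "(b,h') \<in> S"
        proof (rule cl[of _ "(a,h)" "(a,h')"])
          show "(b,h') \<in> verts \<Gamma>" using V inG[OF ab] inH[OF hh] by simp
          show "(a,h) \<in> S" "(a,h') \<in> S" using P by auto
          show "adj \<Gamma> (b,h') (a,h)" using e3 symG symH ab hh by blast
          show "adj \<Gamma> (b,h') (a,h')" using e1 symG ab by blast
          show "adj \<Gamma> (a,h) (a,h')" using e2 hh by blast
        qed
      qed
    qed
  qed
  have "(x,y) \<in> S" if x: "x \<in> verts G" and y: "y \<in> verts H" for x y
  proof -
    obtain x' where xx: "adj G x x'" using gG x unfolding good_def by blast
    have "conn H" using gH unfolding good_def by simp
    then have R: "(\<exists>g\<in>verts H. P g) \<Longrightarrow> (\<forall>a b. adj H a b \<longrightarrow> P a \<longrightarrow> P b) \<Longrightarrow> (\<forall>g\<in>verts H. P g)" for P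
      unfolding conn_def by blast
    have "\<forall>y\<in>verts H. (x,y) \<in> S \<and> (x',y) \<in> S"
    proof (rule R)
      show "\<exists>y\<in>verts H. (x,y) \<in> S \<and> (x',y) \<in> S" using stepA x inG[OF xx] inH[OF hh] by blast
      show "\<forall>a b. adj H a b \<longrightarrow> (x, a) \<in> S \<and> (x', a) \<in> S \<longrightarrow> (x, b) \<in> S \<and> (x', b) \<in> S"
      proof (intro allI impI conjI)
        fix a b assume ab: "adj H a b" and P: "(x, a) \<in> S \<and> (x', a) \<in> S"
        show "(x,b) \<in> S"
        proof (rule cl[of _ "(x,a)" "(x',a)"])
          show "(x,b) \<in> verts \<Gamma>" using V inG[OF xx] inH[OF ab] by simp
          show "(x,a) \<in> S" "(x',a) \<in> S" using P by auto
          show "adj \<Gamma> (x,b) (x,a)" using e2 symH ab by blast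
          show "adj \<Gamma> (x,b) (x',a)" using e3 symH ab xx by blast
          show "adj \<Gamma> (x,a) (x',a)" using e1 xx by blast
        qed
        show "(x',b) \<in> S"
        proof (rule cl[of _ "(x,a)" "(x',a)"])
          show "(x',b) \<in> verts \<Gamma>" using V inG[OF xx] inH[OF ab] by simp
          show "(x,a) \<in> S" "(x',a) \<in> S" using P by auto
          show "adj \<Gamma> (x',b) (x,a)" using e3 symH symG ab xx by blast
          show "adj \<Gamma> (x',b) (x',a)" using e2 symH ab by blast
          show "adj \<Gamma> (x,a) (x',a)" using e1 xx by blast
        qed
      qed
    qed
    then show ?thesis using y by blast
  qed
  then show ?thesis using convex_sub[OF cv] V by auto
qed

lemma strong_conv_indep:
  assumes gG: "good G" and gH: "good H" and cv: "cycle_convex (strong_prod G H) S"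
    and ne: "S \<noteq> verts (strong_prod G H)"
  shows "indep (strong_prod G H) S"
proof -
  have wG: "wfg G" and wH: "wfg H" using gG gH unfolding good_def by auto
  have inG: "a \<in> verts G" "b \<in> verts G" if "adj G a b" for a b using gG that unfolding good_def by blast+
  have inH: "a \<in> verts H" "b \<in> verts H" if "adj H a b" for a b using gH that unfolding good_def by blast+
  have symG: "adj G b a" if "adj G a b" for a b using wG that inG[OF that] unfolding wfg_def by blast
  have symH: "adj H b a" if "adj H a b" for a b using wH that inH[OF that] unfolding wfg_def by blast
  have wf: "wfg (strong_prod G H)" using wfg_strong[OF wG wH] .
  note cl = tri_closed[OF wf cv]
  note CL = closure[OF wf verts_strong _ gG gH cv]
  have "\<not> adj (strong_prod G H) p1 p2" if p: "p1 \<in> S" "p2 \<in> S" for p1 p2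
  proof
    assume a: "adj (strong_prod G H) p1 p2"
    obtain g1 h1 g2 h2 where pp: "p1 = (g1,h1)" "p2 = (g2,h2)" by (cases p1, cases p2)
    have "S = verts (strong_prod G H)"
    proof (cases "g1 = g2 \<and> adj H h1 h2")
      case True then show ?thesis using CL[of g1 h1 h2] p pp by auto
    next
      case False
      then have gg: "adj G g1 g2" using a pp by auto
      show ?thesis
      proof (cases "h1 = h2")
        case True
        have h1V: "h1 \<in> verts H" using p pp convex_sub[OF cv] by auto
        obtain h' where hh: "adj H h1 h'" using gH h1V unfolding good_def by blast
        have "(g1,h') \<in> S"
          by (rule cl[of _ "(g1,h1)" "(g2,h2)"]) (use hh p pp gg True inG inH symH a in auto)
        then show ?thesis using CL[of g1 h1 h'] p pp hh by auto
      next
        case hne: False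
        then have hh: "adj H h1 h2" using a pp False by auto
        have "(g1,h2) \<in> S"
          by (rule cl[of _ "(g1,h1)" "(g2,h2)"]) (use hh p pp gg inG inH symH a in auto)
        then show ?thesis using CL[of g1 h1 h2] p pp hh by auto
      qed
    qed
    with ne show False by simp
  qed
  then show ?thesis unfolding indep_def using convex_sub[OF cv] by blast
qed

lemma lex_conv_indep:
  assumes gG: "good G" and gH: "good H" and cv: "cycle_convex (lexic_prod G H) S"
    and ne: "S \<noteq> verts (lexic_prod G H)"
  shows "indep (lexic_prod G H) S"
proof -
  have wG: "wfg G" and wH: "wfg H" using gG gH unfolding good_def by auto
  have inG: "a \<in> verts G" "b \<in> verts G" if "adj G a b" for a b using gG that unfolding good_def by blast+
  have inH: "a \<in> verts H" "b \<in> verts H" if "adj H a b" for a b using gH that unfolding good_def by blast+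
  have symG: "adj G b a" if "adj G a b" for a b using wG that inG[OF that] unfolding wfg_def by blast
  have symH: "adj H b a" if "adj H a b" for a b using wH that inH[OF that] unfolding wfg_def by blast
  have wf: "wfg (lexic_prod G H)" using wfg_lex[OF wG wH] .
  note cl = tri_closed[OF wf cv]
  have sup: "adj (lexic_prod G H) (g1,h1) (g2,h2)" if "adj (strong_prod G H) (g1,h1) (g2,h2)" for g1 h1 g2 h2
    using that by auto
  note CL = closure[OF wf verts_lex sup gG gH cv]
  have "\<not> adj (lexic_prod G H) p1 p2" if p: "p1 \<in> S" "p2 \<in> S" for p1 p2
  proof
    assume a: "adj (lexic_prod G H) p1 p2"
    obtain g1 h1 g2 h2 where pp: "p1 = (g1,h1)" "p2 = (g2,h2)" by (cases p1, cases p2)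
    have "S = verts (lexic_prod G H)"
    proof (cases "g1 = g2 \<and> adj H h1 h2")
      case True then show ?thesis using CL[of g1 h1 h2] p pp by auto
    next
      case False
      then have gg: "adj G g1 g2" using a pp by auto
      have h1V: "h1 \<in> verts H" using p pp convex_sub[OF cv] by auto
      obtain h' where hh: "adj H h1 h'" using gH h1V unfolding good_def by blast
      have "(g1,h') \<in> S"
        by (rule cl[of _ "(g1,h1)" "(g2,h2)"]) (use hh p pp gg inG inH symH a in auto)
      then show ?thesis using CL[of g1 h1 h'] p pp hh by auto
    qed
    with ne show False by simp
  qed
  then show ?thesis unfolding indep_def using convex_sub[OF cv] by blast
qed




lemma conn_path:
  fixes G :: "nat graph"
  assumes V: "verts G = {0..<n}" and E: "\<And>a. a + 1 < n \<Longrightarrow> adj G a (a+1) \<and> adj G (a+1) a"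
  shows "conn G"
  unfolding conn_def
proof (intro allI impI ballI)
  fix P g assume ex: "\<exists>g\<in>verts G. P g" and cl: "\<forall>a b. adj G a b \<longrightarrow> P a \<longrightarrow> P b" and g: "g \<in> verts G"
  obtain g0 where g0: "g0 < n" "P g0" using ex V by auto
  have up: "g0 + d < n \<longrightarrow> P (g0 + d)" for d
  proof (induction d)
    case 0 then show ?case using g0 by simp
  next
    case (Suc d) then show ?case using cl E[of "g0+d"] by auto
  qed
  have down: "d \<le> g0 \<longrightarrow> P (g0 - d)" for d
  proof (induction d)
    case 0 then show ?case using g0 by simp
  next
    case (Suc d)
    show ?case
    proof
      assume "Suc d \<le> g0"
      then have "g0 - Suc d + 1 = g0 - d" "g0 - Suc d + 1 < n" using g0 by auto
      then show "P (g0 - Suc d)" using Suc cl E[of "g0 - Suc d"] \<open>Suc d \<le> g0\<close> by auto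
    qed
  qed
  have "g < n" using g V by simp
  show "P g"
  proof (cases "g0 \<le> g")
    case True then show ?thesis using up[of "g - g0"] \<open>g < n\<close> by simp
  next
    case False then show ?thesis using down[of "g0 - g"] by simp
  qed
qed

lemma verts_K[simp]: "verts (Kg m) = {0..<m}" by (simp add: Kg_def verts_def)
lemma adj_K[simp]: "adj (Kg m) a b \<longleftrightarrow> a < m \<and> b < m \<and> a \<noteq> b" by (simp add: Kg_def adj_def)
lemma verts_C[simp]: "verts (Cg m) = {0..<m}" by (simp add: Cg_def verts_def)
lemma adj_C[simp]: "adj (Cg n) a b \<longleftrightarrow> a < n \<and> b < n \<and> a \<noteq> b \<and> (b = (a + 1) mod n \<or> a = (b + 1) mod n)"
  by (simp add: Cg_def adj_def)
lemma verts_P[simp]: "verts (Pg m) = {0..<m}" by (simp add: Pg_def verts_def)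
lemma adj_P[simp]: "adj (Pg n) a b \<longleftrightarrow> a < n \<and> b < n \<and> (b = a + 1 \<or> a = b + 1)"
  by (simp add: Pg_def adj_def)

lemma good_K: "2 \<le> m \<Longrightarrow> good (Kg m)"
  unfolding good_def wfg_def
proof (intro conjI)
  assume m: "2 \<le> m"
  show "conn (Kg m)" by (rule conn_path[of _ m]) auto
  show "\<forall>g\<in>verts (Kg m). \<exists>g'. adj (Kg m) g g'"
  proof
    fix g assume "g \<in> verts (Kg m)"
    then show "\<exists>g'. adj (Kg m) g g'" using m by (intro exI[of _ "if g = 0 then 1 else 0"]) auto
  qed
qed auto

lemma good_C: "3 \<le> n \<Longrightarrow> good (Cg n)"
  unfolding good_def wfg_def
proof (intro conjI)
  assume n: "3 \<le> n"
  show "conn (Cg n)" by (rule conn_path[of _ n]) auto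
  show "\<forall>g\<in>verts (Cg n). \<exists>g'. adj (Cg n) g g'"
  proof
    fix g assume g: "g \<in> verts (Cg n)"
    have "(g + 1) mod n \<noteq> g"
    proof (cases "g + 1 < n")
      case True then show ?thesis by simp
    next
      case False then have "g + 1 = n" using g by simp
      then show ?thesis using n by simp
    qed
    then show "\<exists>g'. adj (Cg n) g g'" using g n by (intro exI[of _ "(g + 1) mod n"]) auto
  qed
qed auto

lemma good_P: "2 \<le> n \<Longrightarrow> good (Pg n)"
  unfolding good_def wfg_def
proof (intro conjI)
  assume n: "2 \<le> n"
  show "conn (Pg n)" by (rule conn_path[of _ n]) auto
  show "\<forall>g\<in>verts (Pg n). \<exists>g'. adj (Pg n) g g'"
  proof
    fix g assume g: "g \<in> verts (Pg n)"
    then show "\<exists>g'. adj (Pg n) g g'" using n by (intro exI[of _ "if g + 1 < n then g + 1 else g - 1"]) auto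
  qed
qed auto

lemma alphaK: assumes "indep (Kg m) I" shows "card I \<le> 1"
proof -
  have f: "finite I" using assms unfolding indep_def by (auto intro: finite_subset)
  have "\<forall>a\<in>I. \<forall>b\<in>I. a = b"
  proof (intro ballI)
    fix a b assume ab: "a \<in> I" "b \<in> I"
    then have "a < m" "b < m" using assms unfolding indep_def by auto
    then show "a = b" using ab assms unfolding indep_def by auto
  qed
  then show ?thesis using card_le_Suc0_iff_eq[OF f] by simp
qed

lemma alphaC:
  assumes n: "3 \<le> n" and I: "indep (Cg n) I"
  shows "card I \<le> n div 2"
proof -
  define f where "f i = (i + 1) mod n" for i
  have IV: "I \<subseteq> {0..<n}" using I unfolding indep_def by simp
  have fe: "f x = (if x + 1 = n then 0 else x + 1)" if "x < n" for x
    using that unfolding f_def by auto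
  have inj: "inj_on f {0..<n}"
  proof (rule inj_onI)
    fix x y assume "x \<in> {0..<n}" "y \<in> {0..<n}" "f x = f y"
    then show "x = y" using fe[of x] fe[of y] by (auto split: if_splits)
  qed
  have ne: "f i \<noteq> i" if "i < n" for i
  proof (cases "i + 1 < n")
    case True then show ?thesis unfolding f_def by simp
  next
    case False then have "i + 1 = n" using that by simp
    then show ?thesis unfolding f_def using n by simp
  qed
  have disj: "f ` I \<inter> I = {}"
  proof (rule ccontr)
    assume "f ` I \<inter> I \<noteq> {}"
    then obtain i where i: "i \<in> I" "f i \<in> I" by auto
    then have "adj (Cg n) i (f i)" using IV ne[of i] unfolding f_def by auto
    then show False using I i unfolding indep_def by blast
  qed
  have sub: "f ` I \<union> I \<subseteq> {0..<n}" using IV n unfolding f_def by auto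
  have cf: "card (f ` I) = card I" using inj IV by (meson card_image inj_on_subset)
  have "card (f ` I \<union> I) \<le> n" using card_mono[OF _ sub] by simp
  moreover have "card (f ` I \<union> I) = card (f ` I) + card I"
    using disj IV by (intro card_Un_disjoint) (auto intro: finite_subset)
  ultimately show ?thesis using cf by simp
qed

lemma alphaP:
  assumes I: "indep (Pg n) I"
  shows "card I \<le> (n + 1) div 2"
proof -
  define f where "f i = i + 1" for i :: nat
  have IV: "I \<subseteq> {0..<n}" using I unfolding indep_def by simp
  have disj: "f ` I \<inter> I = {}"
  proof (rule ccontr)
    assume "f ` I \<inter> I \<noteq> {}"
    then obtain i where i: "i \<in> I" "f i \<in> I" by auto
    then have "adj (Pg n) i (f i)" using IV unfolding f_def by auto
    then show False using I i unfolding indep_def by blast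
  qed
  have sub: "f ` I \<union> I \<subseteq> {0..<n+1}" using IV unfolding f_def by auto
  have cf: "card (f ` I) = card I" by (simp add: card_image f_def inj_on_def)
  have "card (f ` I \<union> I) \<le> n + 1" using card_mono[OF _ sub] by simp
  moreover have "card (f ` I \<union> I) = card (f ` I) + card I"
    using disj IV by (intro card_Un_disjoint) (auto intro: finite_subset)
  ultimately show ?thesis using cf by simp
qed

definition cover :: "'a graph \<Rightarrow> ('a \<Rightarrow> nat) \<Rightarrow> nat \<Rightarrow> bool" where
  "cover G q c \<longleftrightarrow> (\<forall>x\<in>verts G. q x < c) \<and> (\<forall>x\<in>verts G. \<forall>y\<in>verts G. q x = q y \<and> x \<noteq> y \<longrightarrow> adj G x y)"

lemma coverK: "cover (Kg m) (\<lambda>_. 0) 1"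
  unfolding cover_def by auto

lemma coverC: assumes "2 \<le> j" shows "cover (Cg (2*j)) (\<lambda>i. i div 2) j"
  unfolding cover_def
proof (intro conjI ballI impI)
  fix x assume "x \<in> verts (Cg (2*j))" then show "x div 2 < j" by auto
next
  fix x y assume x: "x \<in> verts (Cg (2*j))" and y: "y \<in> verts (Cg (2*j))" and e: "x div 2 = y div 2 \<and> x \<noteq> y"
  then have "y = x + 1 \<or> x = y + 1" by presburger
  moreover have "x + 1 < 2 * j \<or> y + 1 < 2*j" using e x y by auto
  ultimately show "adj (Cg (2*j)) x y" using x y e by auto
qed

lemma coverP: "cover (Pg n) (\<lambda>i. i div 2) ((n + 1) div 2)"
  unfolding cover_def
proof (intro conjI ballI impI)
  fix x assume "x \<in> verts (Pg n)" then show "x div 2 < (n + 1) div 2" by auto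
next
  fix x y assume x: "x \<in> verts (Pg n)" and y: "y \<in> verts (Pg n)" and e: "x div 2 = y div 2 \<and> x \<noteq> y"
  then have "y = x + 1 \<or> x = y + 1" by presburger
  then show "adj (Pg n) x y" using x y by auto
qed

definition evens :: "nat \<Rightarrow> nat set" where "evens c = (\<lambda>i. 2 * i) ` {..<c}"

lemma card_evens: "card (evens c) = c"
  unfolding evens_def by (simp add: card_image inj_on_def)

lemma indepK: "1 \<le> m \<Longrightarrow> indep (Kg m) {0}"
  unfolding indep_def by auto

lemma indepC: assumes "3 \<le> n" shows "indep (Cg n) (evens (n div 2))"
  unfolding indep_def evens_def
proof (intro conjI ballI)
  show "(\<lambda>i. 2 * i) ` {..<n div 2} \<subseteq> verts (Cg n)" by auto
next
  fix a b assume a: "a \<in> (\<lambda>i. 2 * i) ` {..<n div 2}" and b: "b \<in> (\<lambda>i. 2 * i) ` {..<n div 2}"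
  then obtain i i' where ii: "a = 2*i" "b = 2*i'" "i < n div 2" "i' < n div 2" by auto
  then have l: "a + 1 < n" "b + 1 < n" by auto
  then have "(a + 1) mod n = a + 1" "(b + 1) mod n = b + 1" by auto
  then show "\<not> adj (Cg n) a b" using ii by auto
qed

lemma indepP: shows "indep (Pg n) (evens ((n + 1) div 2))"
  unfolding indep_def evens_def
proof (intro conjI ballI)
  show "(\<lambda>i. 2 * i) ` {..<(n + 1) div 2} \<subseteq> verts (Pg n)" by auto
next
  fix a b assume a: "a \<in> (\<lambda>i. 2 * i) ` {..<(n+1) div 2}" and b: "b \<in> (\<lambda>i. 2 * i) ` {..<(n+1) div 2}"
  then obtain i i' where ii: "a = 2*i" "b = 2*i'" by auto
  then show "\<not> adj (Pg n) a b" by (auto; presburger)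
qed




lemma lex_bound:
  assumes fG: "finite (verts G)" and fH: "finite (verts H)"
    and aG: "\<And>J. indep G J \<Longrightarrow> card J \<le> A" and aH: "\<And>J. indep H J \<Longrightarrow> card J \<le> B"
    and I: "indep (lexic_prod G H) I"
  shows "card I \<le> A * B"
proof -
  define F where "F g = {h. (g,h) \<in> I}" for g
  have IV: "I \<subseteq> verts G \<times> verts H" using I unfolding indep_def by simp
  have eq: "I = Sigma (fst ` I) F" unfolding F_def by force
  have "finite I" using IV fG fH by (meson finite_SigmaI finite_subset)
  then have fin1: "finite (fst ` I)" by simp
  have FV: "F g \<subseteq> verts H" for g using IV unfolding F_def by auto
  have fin2: "finite (F g)" for g using FV fH by (rule finite_subset)
  have "card I = (\<Sum>g\<in>fst ` I. card (F g))" by (subst eq, rule card_SigmaI) (use fin1 fin2 in auto)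
  also have "\<dots> \<le> (\<Sum>g\<in>fst ` I. B)"
  proof (rule sum_mono)
    fix g assume "g \<in> fst ` I"
    have "indep H (F g)" unfolding indep_def
    proof (intro conjI ballI)
      show "F g \<subseteq> verts H" by (rule FV)
      fix a b assume "a \<in> F g" "b \<in> F g"
      then show "\<not> adj H a b" using I unfolding indep_def F_def by force
    qed
    then show "card (F g) \<le> B" by (rule aH)
  qed
  also have "\<dots> = card (fst ` I) * B" by simp
  also have "\<dots> \<le> A * B"
  proof -
    have "indep G (fst ` I)" unfolding indep_def
    proof (intro conjI ballI)
      show "fst ` I \<subseteq> verts G" using IV by auto
      fix a b assume "a \<in> fst ` I" "b \<in> fst ` I"
      then obtain h1 h2 where "(a,h1) \<in> I" "(b,h2) \<in> I" by force
      then show "\<not> adj G a b" using I unfolding indep_def by force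
    qed
    then show ?thesis using aG by simp
  qed
  finally show ?thesis .
qed

lemma strong_bound_H:
  assumes fG: "finite (verts G)" and fH: "finite (verts H)"
    and aG: "\<And>J. indep G J \<Longrightarrow> card J \<le> A" and cv: "cover H q c"
    and I: "indep (strong_prod G H) I"
  shows "card I \<le> c * A"
proof -
  define f where "f = (\<lambda>(g::'a, h::'b). (q h, g))"
  define J where "J i = {g. \<exists>h. (g,h) \<in> I \<and> q h = i}" for i
  have IV: "I \<subseteq> verts G \<times> verts H" using I unfolding indep_def by simp
  have inj: "inj_on f I"
  proof (rule inj_onI)
    fix p p' assume p: "p \<in> I" "p' \<in> I" "f p = f p'"
    obtain g h g' h' where pp: "p = (g,h)" "p' = (g',h')" by (cases p, cases p')
    have gg: "g = g'" "q h = q h'" using p pp unfolding f_def by auto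
    show "p = p'"
    proof (rule ccontr)
      assume "p \<noteq> p'"
      then have "h \<noteq> h'" using pp gg by auto
      moreover have "h \<in> verts H" "h' \<in> verts H" using IV p pp by auto
      ultimately have "adj H h h'" using cv gg unfolding cover_def by blast
      then have "adj (strong_prod G H) p p'" using pp gg by simp
      then show False using I p unfolding indep_def by blast
    qed
  qed
  have sub: "f ` I \<subseteq> Sigma {..<c} J"
  proof
    fix x assume "x \<in> f ` I"
    then obtain g h where "(g,h) \<in> I" "x = (q h, g)" unfolding f_def by auto
    moreover have "q h < c" using cv IV calculation unfolding cover_def by auto
    ultimately show "x \<in> Sigma {..<c} J" unfolding J_def by auto
  qed
  have JV: "J i \<subseteq> verts G" for i using IV unfolding J_def by auto
  have finJ: "finite (J i)" for i using JV fG by (rule finite_subset)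
  have "card I = card (f ` I)" using inj by (simp add: card_image)
  also have "\<dots> \<le> card (Sigma {..<c} J)" by (rule card_mono) (use finJ sub in auto)
  also have "\<dots> = (\<Sum>i<c. card (J i))" by (rule card_SigmaI) (use finJ in auto)
  also have "\<dots> \<le> (\<Sum>i<c. A)"
  proof (rule sum_mono)
    fix i assume "i \<in> {..<c}"
    have "indep G (J i)" unfolding indep_def
    proof (intro conjI ballI)
      show "J i \<subseteq> verts G" by (rule JV)
      fix a b assume "a \<in> J i" "b \<in> J i"
      then obtain h1 h2 where hh: "(a,h1) \<in> I" "(b,h2) \<in> I" "q h1 = i" "q h2 = i" unfolding J_def by auto
      show "\<not> adj G a b"
      proof
        assume ab: "adj G a b"
        have "h1 \<in> verts H" "h2 \<in> verts H" using hh IV by auto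
        then have "h1 = h2 \<or> adj H h1 h2" using cv hh unfolding cover_def by (cases "h1 = h2") auto
        then have "adj (strong_prod G H) (a,h1) (b,h2)" using ab by auto
        then show False using I hh unfolding indep_def by blast
      qed
    qed
    then show "card (J i) \<le> A" by (rule aG)
  qed
  also have "\<dots> = c * A" by simp
  finally show ?thesis .
qed

lemma strong_bound_G:
  assumes fG: "finite (verts G)" and fH: "finite (verts H)"
    and aH: "\<And>J. indep H J \<Longrightarrow> card J \<le> B" and cv: "cover G q c"
    and I: "indep (strong_prod G H) I"
  shows "card I \<le> c * B"
proof -
  define f where "f = (\<lambda>(g::'a, h::'b). (q g, h))"
  define J where "J i = {h. \<exists>g. (g,h) \<in> I \<and> q g = i}" for i
  have IV: "I \<subseteq> verts G \<times> verts H" using I unfolding indep_def by simp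
  have inj: "inj_on f I"
  proof (rule inj_onI)
    fix p p' assume p: "p \<in> I" "p' \<in> I" "f p = f p'"
    obtain g h g' h' where pp: "p = (g,h)" "p' = (g',h')" by (cases p, cases p')
    have gg: "h = h'" "q g = q g'" using p pp unfolding f_def by auto
    show "p = p'"
    proof (rule ccontr)
      assume "p \<noteq> p'"
      then have "g \<noteq> g'" using pp gg by auto
      moreover have "g \<in> verts G" "g' \<in> verts G" using IV p pp by auto
      ultimately have "adj G g g'" using cv gg unfolding cover_def by blast
      then have "adj (strong_prod G H) p p'" using pp gg by simp
      then show False using I p unfolding indep_def by blast
    qed
  qed
  have sub: "f ` I \<subseteq> Sigma {..<c} J"
  proof
    fix x assume "x \<in> f ` I"
    then obtain g h where "(g,h) \<in> I" "x = (q g, h)" unfolding f_def by auto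
    moreover have "q g < c" using cv IV calculation unfolding cover_def by auto
    ultimately show "x \<in> Sigma {..<c} J" unfolding J_def by auto
  qed
  have JV: "J i \<subseteq> verts H" for i using IV unfolding J_def by auto
  have finJ: "finite (J i)" for i using JV fH by (rule finite_subset)
  have "card I = card (f ` I)" using inj by (simp add: card_image)
  also have "\<dots> \<le> card (Sigma {..<c} J)" by (rule card_mono) (use finJ sub in auto)
  also have "\<dots> = (\<Sum>i<c. card (J i))" by (rule card_SigmaI) (use finJ in auto)
  also have "\<dots> \<le> (\<Sum>i<c. B)"
  proof (rule sum_mono)
    fix i assume "i \<in> {..<c}"
    have "indep H (J i)" unfolding indep_def
    proof (intro conjI ballI)
      show "J i \<subseteq> verts H" by (rule JV)
      fix a b assume "a \<in> J i" "b \<in> J i"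
      then obtain g1 g2 where hh: "(g1,a) \<in> I" "(g2,b) \<in> I" "q g1 = i" "q g2 = i" unfolding J_def by auto
      show "\<not> adj H a b"
      proof
        assume ab: "adj H a b"
        have "g1 \<in> verts G" "g2 \<in> verts G" using hh IV by auto
        then have "g1 = g2 \<or> adj G g1 g2" using cv hh unfolding cover_def by (cases "g1 = g2") auto
        then have "adj (strong_prod G H) (g1,a) (g2,b)" using ab by auto
        then show False using I hh unfolding indep_def by blast
      qed
    qed
    then show "card (J i) \<le> B" by (rule aH)
  qed
  also have "\<dots> = c * B" by simp
  finally show ?thesis .
qed

lemma prod_indep_lex:
  assumes "indep G A" "indep H B" shows "indep (lexic_prod G H) (A \<times> B)"
  using assms unfolding indep_def by auto

lemma prod_indep_strong:
  assumes "indep G A" "indep H B" shows "indep (strong_prod G H) (A \<times> B)"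
  using assms unfolding indep_def by auto




lemma Ccc_strong:
  assumes gG: "good G" and gH: "good H" and e: "adj H ha hb" and ga: "ga \<in> verts G"
    and ub: "\<And>I. indep (strong_prod G H) I \<Longrightarrow> card I \<le> c"
    and Iz: "indep (strong_prod G H) Iz" "card Iz = c"
  shows "Ccc (strong_prod G H) = c"
proof -
  have wG: "wfg G" "finite (verts G)" and wH: "wfg H" "finite (verts H)"
    and hV: "ha \<in> verts H" "hb \<in> verts H" using gG gH e unfolding good_def by auto
  show ?thesis
  proof (rule Ccc_eqI[OF wfg_strong[OF wG(1) wH(1)] _ _ Iz, of "(ga,ha)" "(ga,hb)"])
    show "finite (verts (strong_prod G H))" using wG wH by simp
    show "card S \<le> c" if "cycle_convex (strong_prod G H) S" "S \<noteq> verts (strong_prod G H)" for S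
      using ub strong_conv_indep[OF gG gH that] by blast
    show "adj (strong_prod G H) (ga, ha) (ga, hb)" using e by simp
    show "(ga, ha) \<in> verts (strong_prod G H)" "(ga, hb) \<in> verts (strong_prod G H)" using ga hV by auto
  qed
qed

lemma Ccc_lex:
  assumes gG: "good G" and gH: "good H" and e: "adj H ha hb" and ga: "ga \<in> verts G"
    and ub: "\<And>I. indep (lexic_prod G H) I \<Longrightarrow> card I \<le> c"
    and Iz: "indep (lexic_prod G H) Iz" "card Iz = c"
  shows "Ccc (lexic_prod G H) = c"
proof -
  have wG: "wfg G" "finite (verts G)" and wH: "wfg H" "finite (verts H)"
    and hV: "ha \<in> verts H" "hb \<in> verts H" using gG gH e unfolding good_def by auto
  show ?thesis
  proof (rule Ccc_eqI[OF wfg_lex[OF wG(1) wH(1)] _ _ Iz, of "(ga,ha)" "(ga,hb)"])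
    show "finite (verts (lexic_prod G H))" using wG wH by simp
    show "card S \<le> c" if "cycle_convex (lexic_prod G H) S" "S \<noteq> verts (lexic_prod G H)" for S
      using ub lex_conv_indep[OF gG gH that] by blast
    show "adj (lexic_prod G H) (ga, ha) (ga, hb)" using e by simp
    show "(ga, ha) \<in> verts (lexic_prod G H)" "(ga, hb) \<in> verts (lexic_prod G H)" using ga hV by auto
  qed
qed

lemma e01C: "3 \<le> n \<Longrightarrow> adj (Cg n) 0 1" by auto
lemma e01P: "2 \<le> n \<Longrightarrow> adj (Pg n) 0 1" by auto
lemma e01K: "2 \<le> n \<Longrightarrow> adj (Kg n) 0 1" by auto

lemma part1:
  assumes "2 \<le> m" "2 \<le> n"
  shows "Ccc (strong_prod (Kg m) (Kg n)) = 1 \<and> Ccc (lexic_prod (Kg m) (Kg n)) = 1"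
proof
  show "Ccc (strong_prod (Kg m) (Kg n)) = 1"
  proof (rule Ccc_strong[where ha=0 and hb=1 and ga=0 and Iz="{0} \<times> {0}"])
    show "card I \<le> 1" if "indep (strong_prod (Kg m) (Kg n)) I" for I
      using strong_bound_H[OF _ _ alphaK coverK that] by simp
    show "indep (strong_prod (Kg m) (Kg n)) ({0} \<times> {0})"
      using prod_indep_strong[OF indepK indepK] assms by simp
  qed (use assms in \<open>auto simp: good_K\<close>)
  show "Ccc (lexic_prod (Kg m) (Kg n)) = 1"
  proof (rule Ccc_lex[where ha=0 and hb=1 and ga=0 and Iz="{0} \<times> {0}"])
    show "card I \<le> 1" if "indep (lexic_prod (Kg m) (Kg n)) I" for I
      using lex_bound[OF _ _ alphaK alphaK that] by simp
    show "indep (lexic_prod (Kg m) (Kg n)) ({0} \<times> {0})"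
      using prod_indep_lex[OF indepK indepK] assms by simp
  qed (use assms in \<open>auto simp: good_K\<close>)
qed

lemma part2:
  assumes "2 \<le> m" "3 \<le> n"
  shows "Ccc (strong_prod (Kg m) (Cg n)) = n div 2 \<and> Ccc (lexic_prod (Kg m) (Cg n)) = n div 2"
proof
  show "Ccc (strong_prod (Kg m) (Cg n)) = n div 2"
  proof (rule Ccc_strong[where ha=0 and hb=1 and ga=0 and Iz="{0} \<times> evens (n div 2)"])
    show "card I \<le> n div 2" if "indep (strong_prod (Kg m) (Cg n)) I" for I
      using strong_bound_G[OF _ _ alphaC coverK that] assms by simp
    show "indep (strong_prod (Kg m) (Cg n)) ({0} \<times> evens (n div 2))"
      using prod_indep_strong[OF indepK indepC] assms by simp
  qed (use assms in \<open>auto simp: good_K good_C good_P card_cartesian_product card_evens\<close>)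
  show "Ccc (lexic_prod (Kg m) (Cg n)) = n div 2"
  proof (rule Ccc_lex[where ha=0 and hb=1 and ga=0 and Iz="{0} \<times> evens (n div 2)"])
    show "card I \<le> n div 2" if "indep (lexic_prod (Kg m) (Cg n)) I" for I
      using lex_bound[OF _ _ alphaK alphaC that] assms by simp
    show "indep (lexic_prod (Kg m) (Cg n)) ({0} \<times> evens (n div 2))"
      using prod_indep_lex[OF indepK indepC] assms by simp
  qed (use assms in \<open>auto simp: good_K good_C good_P card_cartesian_product card_evens\<close>)
qed

lemma part3:
  assumes "2 \<le> m" "2 \<le> n"
  shows "Ccc (strong_prod (Kg m) (Pg n)) = (n + 1) div 2 \<and> Ccc (lexic_prod (Kg m) (Pg n)) = (n + 1) div 2"
proof
  show "Ccc (strong_prod (Kg m) (Pg n)) = (n + 1) div 2"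
  proof (rule Ccc_strong[where ha=0 and hb=1 and ga=0 and Iz="{0} \<times> evens ((n + 1) div 2)"])
    show "card I \<le> (n + 1) div 2" if "indep (strong_prod (Kg m) (Pg n)) I" for I
      using strong_bound_G[OF _ _ alphaP coverK that] assms by simp
    show "indep (strong_prod (Kg m) (Pg n)) ({0} \<times> evens ((n + 1) div 2))"
      using prod_indep_strong[OF indepK indepP] assms by simp
  qed (use assms in \<open>auto simp: good_K good_C good_P card_cartesian_product card_evens\<close>)
  show "Ccc (lexic_prod (Kg m) (Pg n)) = (n + 1) div 2"
  proof (rule Ccc_lex[where ha=0 and hb=1 and ga=0 and Iz="{0} \<times> evens ((n + 1) div 2)"])
    show "card I \<le> (n + 1) div 2" if "indep (lexic_prod (Kg m) (Pg n)) I" for I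
      using lex_bound[OF _ _ alphaK alphaP that] assms by simp
    show "indep (lexic_prod (Kg m) (Pg n)) ({0} \<times> evens ((n + 1) div 2))"
      using prod_indep_lex[OF indepK indepP] assms by simp
  qed (use assms in \<open>auto simp: good_K good_C good_P card_cartesian_product card_evens\<close>)
qed

lemma part4:
  assumes "3 \<le> m" "3 \<le> n"
  shows "Ccc (lexic_prod (Cg m) (Cg n)) = (m div 2) * (n div 2)"
proof (rule Ccc_lex[where ha=0 and hb=1 and ga=0 and Iz="evens (m div 2) \<times> evens (n div 2)"])
  show "card I \<le> (m div 2) * (n div 2)" if "indep (lexic_prod (Cg m) (Cg n)) I" for I
    using lex_bound[OF _ _ alphaC alphaC that] assms by simp
  show "indep (lexic_prod (Cg m) (Cg n)) (evens (m div 2) \<times> evens (n div 2))"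
    using prod_indep_lex[OF indepC indepC] assms by simp
qed (use assms in \<open>auto simp: good_K good_C good_P card_cartesian_product card_evens\<close>)

lemma part5:
  assumes "3 \<le> 2 * j" "3 \<le> n"
  shows "Ccc (strong_prod (Cg (2 * j)) (Cg n)) = j * (n div 2)"
proof (rule Ccc_strong[where ha=0 and hb=1 and ga=0 and Iz="evens j \<times> evens (n div 2)"])
  show "card I \<le> j * (n div 2)" if "indep (strong_prod (Cg (2*j)) (Cg n)) I" for I
    using strong_bound_G[OF _ _ alphaC coverC that] assms by simp
  show "indep (strong_prod (Cg (2*j)) (Cg n)) (evens j \<times> evens (n div 2))"
    using prod_indep_strong[OF indepC[of "2*j"] indepC[of n]] assms by simp
qed (use assms in \<open>auto simp: good_K good_C good_P card_cartesian_product card_evens\<close>)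

lemma part7:
  assumes "3 \<le> m" "2 \<le> n"
  shows "Ccc (strong_prod (Cg m) (Pg n)) = (m div 2) * ((n + 1) div 2) \<and>
         Ccc (lexic_prod (Cg m) (Pg n)) = (m div 2) * ((n + 1) div 2)"
proof
  show "Ccc (strong_prod (Cg m) (Pg n)) = (m div 2) * ((n + 1) div 2)"
  proof (rule Ccc_strong[where ha=0 and hb=1 and ga=0 and Iz="evens (m div 2) \<times> evens ((n + 1) div 2)"])
    show "card I \<le> (m div 2) * ((n + 1) div 2)" if "indep (strong_prod (Cg m) (Pg n)) I" for I
      using strong_bound_H[OF _ _ alphaC coverP that] assms by (simp add: mult.commute)
    show "indep (strong_prod (Cg m) (Pg n)) (evens (m div 2) \<times> evens ((n + 1) div 2))"
      using prod_indep_strong[OF indepC indepP] assms by simp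
  qed (use assms in \<open>auto simp: good_K good_C good_P card_cartesian_product card_evens\<close>)
  show "Ccc (lexic_prod (Cg m) (Pg n)) = (m div 2) * ((n + 1) div 2)"
  proof (rule Ccc_lex[where ha=0 and hb=1 and ga=0 and Iz="evens (m div 2) \<times> evens ((n + 1) div 2)"])
    show "card I \<le> (m div 2) * ((n + 1) div 2)" if "indep (lexic_prod (Cg m) (Pg n)) I" for I
      using lex_bound[OF _ _ alphaC alphaP that] assms by simp
    show "indep (lexic_prod (Cg m) (Pg n)) (evens (m div 2) \<times> evens ((n + 1) div 2))"
      using prod_indep_lex[OF indepC indepP] assms by simp
  qed (use assms in \<open>auto simp: good_K good_C good_P card_cartesian_product card_evens\<close>)
qed

lemma part8:
  assumes "2 \<le> m" "2 \<le> n"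
  shows "Ccc (strong_prod (Pg m) (Pg n)) = ((m + 1) div 2) * ((n + 1) div 2) \<and>
         Ccc (lexic_prod (Pg m) (Pg n)) = ((m + 1) div 2) * ((n + 1) div 2)"
proof
  show "Ccc (strong_prod (Pg m) (Pg n)) = ((m + 1) div 2) * ((n + 1) div 2)"
  proof (rule Ccc_strong[where ha=0 and hb=1 and ga=0 and Iz="evens ((m + 1) div 2) \<times> evens ((n + 1) div 2)"])
    show "card I \<le> ((m + 1) div 2) * ((n + 1) div 2)" if "indep (strong_prod (Pg m) (Pg n)) I" for I
      using strong_bound_H[OF _ _ alphaP coverP that] assms by (simp add: mult.commute)
    show "indep (strong_prod (Pg m) (Pg n)) (evens ((m + 1) div 2) \<times> evens ((n + 1) div 2))"
      using prod_indep_strong[OF indepP indepP] assms by simp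
  qed (use assms in \<open>auto simp: good_K good_C good_P card_cartesian_product card_evens\<close>)
  show "Ccc (lexic_prod (Pg m) (Pg n)) = ((m + 1) div 2) * ((n + 1) div 2)"
  proof (rule Ccc_lex[where ha=0 and hb=1 and ga=0 and Iz="evens ((m + 1) div 2) \<times> evens ((n + 1) div 2)"])
    show "card I \<le> ((m + 1) div 2) * ((n + 1) div 2)" if "indep (lexic_prod (Pg m) (Pg n)) I" for I
      using lex_bound[OF _ _ alphaP alphaP that] assms by simp
    show "indep (lexic_prod (Pg m) (Pg n)) (evens ((m + 1) div 2) \<times> evens ((n + 1) div 2))"
      using prod_indep_lex[OF indepP indepP] assms by simp
  qed (use assms in \<open>auto simp: good_K good_C good_P card_cartesian_product card_evens\<close>)
qed




lemma dvd_small_int: fixes m x :: int assumes "m dvd x" "\<bar>x\<bar> < m" shows "x = 0"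
proof (rule ccontr)
  assume "x \<noteq> 0"
  then have "\<bar>m\<bar> \<le> \<bar>x\<bar>" using dvd_imp_le_int assms(1) by blast
  then show False using assms(2) by linarith
qed

lemma dvd_shift: fixes m x y c :: int assumes "m dvd x" "x = y + c * m" shows "m dvd y"
proof -
  have "y = x - c * m" using assms(2) by simp
  then show ?thesis using assms(1) by simp
qed

lemma mod_succ_int: fixes x b :: nat
  shows "int ((x mod b + 1) mod b) = (int x + 1) mod int b"
proof -
  have "int ((x mod b + 1) mod b) = (int (x mod b) + 1) mod int b" by (simp add: of_nat_mod add.commute)
  also have "\<dots> = (int x mod int b + 1) mod int b" by (metis of_nat_mod)
  also have "\<dots> = (int x + 1) mod int b" by (simp add: mod_add_left_eq)
  finally show ?thesis .
qed

lemma close_nonadj: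
  fixes q q' k :: nat and z :: int
  assumes d0: "0 < \<bar>int q - int q' - z * int (2*k+1)\<bar>" and d1: "\<bar>int q - int q' - z * int (2*k+1)\<bar> < int k"
  shows "(2*q) mod (2*k+1) \<noteq> (2*q') mod (2*k+1) \<and> \<not> adj (Cg (2*k+1)) ((2*q) mod (2*k+1)) ((2*q') mod (2*k+1))"
proof -
  define b where "b = 2*k+1"
  define d where "d = int q - int q' - z * int b"
  have dd: "0 < \<bar>d\<bar>" "\<bar>d\<bar> < int k" using d0 d1 unfolding d_def b_def by auto
  have e1: "int ((2*q) mod b) = (2 * int q) mod int b" by (simp add: of_nat_mod)
  have e2: "int ((2*q') mod b) = (2 * int q') mod int b" by (simp add: of_nat_mod)
  have A: "(2*q) mod b \<noteq> (2*q') mod b"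
  proof
    assume "(2*q) mod b = (2*q') mod b"
    then have "(2 * int q) mod int b = (2 * int q') mod int b" using e1 e2 by simp
    then have "int b dvd (2 * int q - 2 * int q')" by (simp add: mod_eq_dvd_iff)
    moreover have "2 * int q - 2 * int q' = 2 * d + (2 * z) * int b" unfolding d_def by (simp add: algebra_simps)
    ultimately have "int b dvd 2 * d" by (rule dvd_shift)
    moreover have "\<bar>2 * d\<bar> < int b" using dd unfolding b_def by linarith
    ultimately have "2 * d = 0" by (rule dvd_small_int)
    then show False using dd by simp
  qed
  have B: "(2*q') mod b \<noteq> ((2*q) mod b + 1) mod b"
  proof
    assume "(2*q') mod b = ((2*q) mod b + 1) mod b"
    then have "int ((2*q') mod b) = int (((2*q) mod b + 1) mod b)" by simp
    then have "(2 * int q') mod int b = (2 * int q + 1) mod int b"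
      using e2 mod_succ_int[of "2*q" b] by simp
    then have "int b dvd (2 * int q' - (2 * int q + 1))" by (simp add: mod_eq_dvd_iff)
    moreover have "2 * int q' - (2 * int q + 1) = (- 2 * d - 1) + (- 2 * z) * int b" unfolding d_def by (simp add: algebra_simps)
    ultimately have "int b dvd (- 2 * d - 1)" by (rule dvd_shift)
    moreover have "\<bar>- 2 * d - 1\<bar> < int b" using dd unfolding b_def by linarith
    ultimately have "- 2 * d - 1 = 0" by (rule dvd_small_int)
    then show False by presburger
  qed
  have C: "(2*q) mod b \<noteq> ((2*q') mod b + 1) mod b"
  proof
    assume "(2*q) mod b = ((2*q') mod b + 1) mod b"
    then have "int ((2*q) mod b) = int (((2*q') mod b + 1) mod b)" by simp
    then have "(2 * int q) mod int b = (2 * int q' + 1) mod int b"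
      using e1 mod_succ_int[of "2*q'" b] by simp
    then have "int b dvd (2 * int q - (2 * int q' + 1))" by (simp add: mod_eq_dvd_iff)
    moreover have "2 * int q - (2 * int q' + 1) = (2 * d - 1) + (2 * z) * int b" unfolding d_def by (simp add: algebra_simps)
    ultimately have "int b dvd (2 * d - 1)" by (rule dvd_shift)
    moreover have "\<bar>2 * d - 1\<bar> < int b" using dd unfolding b_def by linarith
    ultimately have "2 * d - 1 = 0" by (rule dvd_small_int)
    then show False by presburger
  qed
  have "\<not> adj (Cg b) ((2*q) mod b) ((2*q') mod b)" using B C by (simp only: adj_C) blast
  then show ?thesis using A unfolding b_def by blast
qed




definition sz :: "nat \<Rightarrow> nat \<Rightarrow> nat" where
  "sz k x = k div 2 + (if odd x \<and> odd k then 1 else 0)"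
definition tt :: "nat \<Rightarrow> nat \<Rightarrow> nat" where
  "tt k x = (\<Sum>i<x. sz k i)"
definition QQ :: "nat \<Rightarrow> nat \<Rightarrow> nat set" where
  "QQ k x = {tt k x ..< tt k x + sz k x}"
definition close :: "nat \<Rightarrow> nat \<Rightarrow> nat \<Rightarrow> bool" where
  "close k q q' \<longleftrightarrow> (\<exists>z::int. 0 < \<bar>int q - int q' - z * int (2*k+1)\<bar> \<and> \<bar>int q - int q' - z * int (2*k+1)\<bar> < int k)"

lemma close_sym: "close k q q' \<Longrightarrow> close k q' q"
  unfolding close_def
proof (elim exE)
  fix z assume "0 < \<bar>int q - int q' - z * int (2*k+1)\<bar> \<and> \<bar>int q - int q' - z * int (2*k+1)\<bar> < int k"
  then show "\<exists>z. 0 < \<bar>int q' - int q - z * int (2 * k + 1)\<bar> \<and> \<bar>int q' - int q - z * int (2 * k + 1)\<bar> < int k"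
    by (intro exI[of _ "-z"]) (auto simp: algebra_simps abs_minus_commute)
qed

lemma close_D: "close k q q' \<Longrightarrow>
   (2*q) mod (2*k+1) \<noteq> (2*q') mod (2*k+1) \<and> \<not> adj (Cg (2*k+1)) ((2*q) mod (2*k+1)) ((2*q') mod (2*k+1))"
  unfolding close_def using close_nonadj by blast

lemma sz_le: "1 \<le> k \<Longrightarrow> sz k x \<le> k"
  unfolding sz_def by auto

lemma sz_pair: "sz k x + sz k (Suc x) = k"
  unfolding sz_def by auto presburger+

lemma tt_Suc: "tt k (Suc x) = tt k x + sz k x"
  unfolding tt_def by simp

lemma sum_odd: "(\<Sum>i<2*n. (if odd i then 1 else 0::nat)) = n"
proof (induction n)
  case 0 then show ?case by simp
next
  case (Suc n)
  have "2 * Suc n = Suc (Suc (2*n))" by simp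
  then show ?case using Suc by (simp only: sum.lessThan_Suc) simp
qed

lemma tt_2k: "tt k (2*k) = 2*k*(k div 2) + (if odd k then k else 0)"
proof -
  have "tt k (2*k) = (\<Sum>i<2*k. k div 2) + (\<Sum>i<2*k. (if odd i \<and> odd k then 1 else 0::nat))"
    unfolding tt_def sz_def by (simp add: sum.distrib)
  also have "(\<Sum>i<2*k. (if odd i \<and> odd k then 1 else 0::nat)) = (if odd k then k else 0)"
  proof (cases "odd k")
    case True then show ?thesis using sum_odd[of k] by simp
  next
    case False then show ?thesis by simp
  qed
  finally show ?thesis by simp
qed

lemma same_row:
  assumes k: "1 \<le> k" and q: "q \<in> QQ k x" "q' \<in> QQ k x" "q \<noteq> q'"
  shows "close k q q'"
  unfolding close_def
proof (intro exI[of _ 0] conjI)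
  have "sz k x \<le> k" using sz_le[OF k] .
  then show "\<bar>int q - int q' - 0 * int (2 * k + 1)\<bar> < int k" using q unfolding QQ_def by auto
  show "0 < \<bar>int q - int q' - 0 * int (2 * k + 1)\<bar>" using q by auto
qed

lemma pair_close:
  assumes k: "1 \<le> k" and x1: "x1 < 2*k+1" and q1: "q1 \<in> QQ k x1" and q2: "q2 \<in> QQ k ((x1 + 1) mod (2*k+1))"
  shows "close k q1 q2"
proof (cases "x1 + 1 < 2*k+1")
  case True
  then have q2': "q2 \<in> QQ k (Suc x1)" using q2 by simp
  have "sz k x1 + sz k (Suc x1) = k" by (rule sz_pair)
  then show ?thesis unfolding close_def
    using q1 q2' unfolding QQ_def tt_Suc by (intro exI[of _ 0]) auto
next
  case False
  then have x1e: "x1 = 2*k" using x1 by simp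
  then have q2': "q2 \<in> QQ k 0" using q2 by simp
  define s where "s = k div 2"
  have Q0: "QQ k 0 = {0..<s}" unfolding QQ_def tt_def sz_def s_def by simp
  have szk: "sz k (2*k) = s" unfolding sz_def s_def by simp
  show ?thesis unfolding close_def
  proof (intro exI[of _ "int s"])
    show "0 < \<bar>int q1 - int q2 - int s * int (2 * k + 1)\<bar> \<and> \<bar>int q1 - int q2 - int s * int (2 * k + 1)\<bar> < int k"
    proof (cases "odd k")
      case True
      then have kk: "k = 2*s+1" unfolding s_def by presburger
      have t: "tt k (2*k) = 4*s*s + 4*s + 1" using tt_2k[of k] True kk unfolding s_def[symmetric]
        by (simp add: algebra_simps)
      have A: "int s * int (2 * k + 1) = 4 * (int s * int s) + 3 * int s" using kk by (simp add: algebra_simps)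
      have "tt k (2*k) \<le> q1" "q1 < tt k (2*k) + s" using q1 x1e szk unfolding QQ_def by auto
      then have B0: "int (tt k (2*k)) \<le> int q1" "int q1 < int (tt k (2*k)) + int s" by linarith+
      have "int (tt k (2*k)) = 4 * (int s * int s) + 4 * int s + 1" using t by simp
      then have B: "4 * (int s * int s) + 4 * int s + 1 \<le> int q1" "int q1 < 4 * (int s * int s) + 4 * int s + 1 + int s"
        using B0 by linarith+
      have C: "int q2 < int s" using q2' Q0 by auto
      show ?thesis using A B C kk by linarith
    next
      case False
      then have kk: "k = 2*s" unfolding s_def by presburger
      have t: "tt k (2*k) = 4*s*s" using tt_2k[of k] False kk unfolding s_def[symmetric]
        by (simp add: algebra_simps)
      have A: "int s * int (2 * k + 1) = 4 * (int s * int s) + int s" using kk by (simp add: algebra_simps)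
      have "tt k (2*k) \<le> q1" "q1 < tt k (2*k) + s" using q1 x1e szk unfolding QQ_def by auto
      then have B0: "int (tt k (2*k)) \<le> int q1" "int q1 < int (tt k (2*k)) + int s" by linarith+
      have "int (tt k (2*k)) = 4 * (int s * int s)" using t by simp
      then have B: "4 * (int s * int s) \<le> int q1" "int q1 < 4 * (int s * int s) + int s"
        using B0 by linarith+
      have C: "int q2 < int s" using q2' Q0 by auto
      show ?thesis using A B C kk by linarith
    qed
  qed
qed




definition phi :: "nat \<Rightarrow> nat \<Rightarrow> nat \<Rightarrow> nat" where
  "phi j k x = (if x < 2*(j-k) then x mod 2 else x - 2*(j-k))"

definition Iodd :: "nat \<Rightarrow> nat \<Rightarrow> (nat \<times> nat) set" where
  "Iodd j k = (\<lambda>(x,q). (x, (2*q) mod (2*k+1))) ` (SIGMA x:{..<2*j+1}. QQ k (phi j k x))"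

lemma phi_lt: "k \<le> j \<Longrightarrow> 1 \<le> k \<Longrightarrow> x < 2*j+1 \<Longrightarrow> phi j k x < 2*k+1"
  unfolding phi_def by auto

lemma phi_step:
  assumes kj: "k \<le> j" and k: "1 \<le> k" and x: "x < 2*j+1"
  shows "phi j k ((x+1) mod (2*j+1)) = (phi j k x + 1) mod (2*k+1) \<or>
         phi j k x = (phi j k ((x+1) mod (2*j+1)) + 1) mod (2*k+1)"
proof (cases "x + 1 < 2*j+1")
  case True
  then have e: "(x+1) mod (2*j+1) = x + 1" by simp
  show ?thesis
  proof (cases "x + 1 < 2*(j-k)")
    case True
    then have "phi j k (x+1) = (x+1) mod 2" "phi j k x = x mod 2" unfolding phi_def by auto
    then show ?thesis unfolding e using k by (cases "even x") (auto simp: mod_Suc)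
  next
    case False
    show ?thesis
    proof (cases "x + 1 = 2*(j-k)")
      case True
      then have "phi j k (x+1) = 0" "phi j k x = 1" unfolding phi_def by auto presburger
      then show ?thesis unfolding e using k by simp
    next
      case False2: False
      then have "phi j k (x+1) = x + 1 - 2*(j-k)" "phi j k x = x - 2*(j-k)" "x - 2*(j-k) + 1 < 2*k+1"
        unfolding phi_def using False \<open>x+1 < 2*j+1\<close> kj by auto
      moreover have "2*(j-k) \<le> x" using False False2 by simp
      ultimately show ?thesis unfolding e by (simp add: Suc_diff_le)
    qed
  qed
next
  case False
  then have "x = 2*j" using x by simp
  then have "(x+1) mod (2*j+1) = 0" "phi j k x = 2*k" "phi j k 0 = 0" unfolding phi_def using kj by auto
  then show ?thesis by simp
qed

lemma Iodd_indep:
  assumes kj: "k \<le> j" and k: "1 \<le> k"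
  shows "indep (strong_prod (Cg (2*j+1)) (Cg (2*k+1))) (Iodd j k)"
  unfolding indep_def
proof (intro conjI ballI)
  show "Iodd j k \<subseteq> verts (strong_prod (Cg (2 * j + 1)) (Cg (2 * k + 1)))"
    unfolding Iodd_def by auto
next
  fix p p' assume p: "p \<in> Iodd j k" and p': "p' \<in> Iodd j k"
  obtain x q where xq: "p = (x, (2*q) mod (2*k+1))" "x < 2*j+1" "q \<in> QQ k (phi j k x)"
    using p unfolding Iodd_def by auto
  obtain x' q' where xq': "p' = (x', (2*q') mod (2*k+1))" "x' < 2*j+1" "q' \<in> QQ k (phi j k x')"
    using p' unfolding Iodd_def by auto
  have cl: "close k q q'" if "adj (Cg (2*j+1)) x x'"
  proof -
    have "x' = (x+1) mod (2*j+1) \<or> x = (x'+1) mod (2*j+1)" using that by simp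
    then show ?thesis
    proof
      assume e: "x' = (x+1) mod (2*j+1)"
      show ?thesis using phi_step[OF kj k xq(2)]
      proof
        assume "phi j k ((x + 1) mod (2 * j + 1)) = (phi j k x + 1) mod (2 * k + 1)"
        then show ?thesis using pair_close[OF k phi_lt[OF kj k xq(2)] xq(3)] xq'(3) e by simp
      next
        assume "phi j k x = (phi j k ((x + 1) mod (2 * j + 1)) + 1) mod (2 * k + 1)"
        then show ?thesis using close_sym pair_close[OF k phi_lt[OF kj k xq'(2)] xq'(3)] xq(3) e by simp
      qed
    next
      assume e: "x = (x'+1) mod (2*j+1)"
      show ?thesis using phi_step[OF kj k xq'(2)]
      proof
        assume "phi j k ((x' + 1) mod (2 * j + 1)) = (phi j k x' + 1) mod (2 * k + 1)"
        then show ?thesis using close_sym pair_close[OF k phi_lt[OF kj k xq'(2)] xq'(3)] xq(3) e by simp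
      next
        assume "phi j k x' = (phi j k ((x' + 1) mod (2 * j + 1)) + 1) mod (2 * k + 1)"
        then show ?thesis using pair_close[OF k phi_lt[OF kj k xq(2)] xq(3)] xq'(3) e by simp
      qed
    qed
  qed
  show "\<not> adj (strong_prod (Cg (2 * j + 1)) (Cg (2 * k + 1))) p p'"
  proof
    assume a: "adj (strong_prod (Cg (2 * j + 1)) (Cg (2 * k + 1))) p p'"
    show False
    proof (cases "x = x'")
      case True
      then have ay: "adj (Cg (2*k+1)) ((2*q) mod (2*k+1)) ((2*q') mod (2*k+1))"
        using a xq xq' by auto
      then have "q \<noteq> q'" by auto
      then have "close k q q'" using same_row[OF k xq(3)] xq'(3) True by simp
      then show False using close_D ay by blast
    next
      case False
      then have "adj (Cg (2*j+1)) x x'" using a xq xq' by auto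
      then have "close k q q'" by (rule cl)
      then show False using close_D[of k q q'] a xq xq' by auto
    qed
  qed
qed

lemma sum_split: "(\<Sum>x<m+n. f x) = (\<Sum>x<m. f x) + (\<Sum>x<n. f (m + x :: nat))"
  by (induction n) (auto simp: add.assoc)

lemma sum_mod2: "(\<Sum>x<2*n. f (x mod 2 :: nat)) = n * (f 0 + f 1)"
proof (induction n)
  case 0 then show ?case by simp
next
  case (Suc n)
  have "2 * Suc n = Suc (Suc (2*n))" by simp
  then show ?case using Suc by (simp only: sum.lessThan_Suc) (simp add: mod_Suc)
qed

lemma card_QQ: "card (QQ k x) = sz k x" unfolding QQ_def by simp

lemma Iodd_card:
  assumes kj: "k \<le> j" and k: "1 \<le> k"
  shows "card (Iodd j k) = j * k + k div 2"
proof -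
  define F where "F = (\<lambda>(x::nat,q::nat). (x, (2*q) mod (2*k+1)))"
  define A where "A = (SIGMA x:{..<2*j+1}. QQ k (phi j k x))"
  have inj: "inj_on F A"
  proof (rule inj_onI)
    fix u v assume u: "u \<in> A" and v: "v \<in> A" and e: "F u = F v"
    obtain x q x' q' where uv: "u = (x,q)" "v = (x',q')" by (cases u, cases v)
    have xx: "x = x'" and yy: "(2*q) mod (2*k+1) = (2*q') mod (2*k+1)" using e uv unfolding F_def by auto
    show "u = v"
    proof (rule ccontr)
      assume "u \<noteq> v"
      then have "q \<noteq> q'" using uv xx by auto
      moreover have "q \<in> QQ k (phi j k x)" "q' \<in> QQ k (phi j k x)" using u v uv xx unfolding A_def by auto
      ultimately have "close k q q'" using same_row[OF k] by blast
      then show False using close_D yy by blast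
    qed
  qed
  have "card (Iodd j k) = card A" unfolding Iodd_def A_def[symmetric] F_def[symmetric]
    using inj by (simp add: card_image)
  also have "\<dots> = (\<Sum>x<2*j+1. sz k (phi j k x))" unfolding A_def
    by (subst card_SigmaI) (auto simp: card_QQ QQ_def)
  also have "\<dots> = j * k + k div 2"
  proof -
    define d where "d = j - k"
    have jj: "2*j+1 = 2*d + (2*k+1)" unfolding d_def using kj by simp
    have s1: "(\<Sum>x<2*d. sz k (phi j k x)) = (\<Sum>x<2*d. sz k (x mod 2))"
      by (rule sum.cong) (auto simp: phi_def d_def)
    have s2: "(\<Sum>x<2*k+1. sz k (phi j k (2*d + x))) = (\<Sum>x<2*k+1. sz k x)"
      by (rule sum.cong) (auto simp: phi_def d_def)
    have s3: "(\<Sum>x<2*k+1. sz k x) = tt k (2*k) + sz k (2*k)" unfolding tt_def by simp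
    have s4: "(\<Sum>x<2*d. sz k (x mod 2)) = d * k" using sum_mod2[of "sz k" d] sz_pair[of k 0] by simp
    have "(\<Sum>x<2*j+1. sz k (phi j k x)) = (\<Sum>x<2*d. sz k (phi j k x)) + (\<Sum>x<2*k+1. sz k (phi j k (2*d + x)))"
      by (simp only: jj sum_split)
    also have "\<dots> = d * k + (tt k (2*k) + sz k (2*k))" by (simp only: s1 s2 s3 s4)
    finally have "(\<Sum>x<2*j+1. sz k (phi j k x)) = d * k + tt k (2*k) + sz k (2*k)" by simp
    also have "\<dots> = j * k + k div 2"
    proof (cases "odd k")
      case True
      then obtain s where kk: "k = 2*s+1" by (metis oddE)
      have "sz k (2*k) = s" unfolding sz_def kk by simp
      moreover have "tt k (2*k) = 2*k*s + k" using tt_2k[of k] True kk by simp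
      moreover have "j = d + k" unfolding d_def using kj by simp
      ultimately show ?thesis using kk by (simp add: algebra_simps)
    next
      case False
      then obtain s where kk: "k = 2*s" by (metis evenE)
      have "sz k (2*k) = s" unfolding sz_def kk by simp
      moreover have "tt k (2*k) = 2*k*s" using tt_2k[of k] False kk by simp
      moreover have "j = d + k" unfolding d_def using kj by simp
      ultimately show ?thesis using kk by (simp add: algebra_simps)
    qed
    finally show ?thesis .
  qed
  finally show ?thesis .
qed

lemma odd_bound:
  assumes j: "1 \<le> j" and k: "1 \<le> k" and I: "indep (strong_prod (Cg (2*j+1)) (Cg (2*k+1))) I"
  shows "card I \<le> j * k + k div 2"
proof -
  define a where "a = 2*j+1"
  define b where "b = 2*k+1"
  define R where "R x = {y. (x,y) \<in> I}" for x
  define f where "f x = (x + 1) mod a" for x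
  have a3: "3 \<le> a" "3 \<le> b" unfolding a_def b_def using j k by auto
  have IV: "I \<subseteq> {0..<a} \<times> {0..<b}" using I unfolding indep_def a_def b_def by simp
  have RV: "R x \<subseteq> {0..<b}" for x using IV unfolding R_def by auto
  have finR: "finite (R x)" for x using RV by (rule finite_subset) simp
  have eqI: "I = Sigma {..<a} R" using IV unfolding R_def by auto
  have cI: "card I = (\<Sum>x<a. card (R x))" by (subst eqI, rule card_SigmaI) (use finR in auto)
  have fe: "f x = (if x + 1 = a then 0 else x + 1)" if "x < a" for x
    using that unfolding f_def by auto
  have inj: "inj_on f {..<a}"
  proof (rule inj_onI)
    fix x y assume "x \<in> {..<a}" "y \<in> {..<a}" "f x = f y"
    then show "x = y" using fe[of x] fe[of y] by (auto split: if_splits)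
  qed
  have fim: "f ` {..<a} = {..<a}"
    by (rule endo_inj_surj) (use inj a3 in \<open>auto simp: f_def\<close>)
  have pair: "card (R x) + card (R (f x)) \<le> k" if x: "x < a" for x
  proof -
    have fx: "f x \<noteq> x" "f x < a" using fe[OF x] a3 x by auto
    have axf: "adj (Cg a) x (f x)" "adj (Cg a) (f x) x" using fx x unfolding f_def by auto
    have disj: "R x \<inter> R (f x) = {}"
    proof (rule ccontr)
      assume "R x \<inter> R (f x) \<noteq> {}"
      then obtain y where "(x,y) \<in> I" "(f x, y) \<in> I" unfolding R_def by auto
      moreover have "adj (strong_prod (Cg a) (Cg b)) (x,y) (f x, y)" using axf by simp
      ultimately show False using I unfolding indep_def a_def b_def by blast
    qed
    have ind: "indep (Cg b) (R x \<union> R (f x))" unfolding indep_def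
    proof (intro conjI ballI)
      show "R x \<union> R (f x) \<subseteq> verts (Cg b)" using RV by auto
      fix y1 y2 assume y: "y1 \<in> R x \<union> R (f x)" "y2 \<in> R x \<union> R (f x)"
      show "\<not> adj (Cg b) y1 y2"
      proof
        assume yy: "adj (Cg b) y1 y2"
        from y have "\<exists>u v. (u,y1) \<in> I \<and> (v,y2) \<in> I \<and> adj (strong_prod (Cg a) (Cg b)) (u,y1) (v,y2)"
          unfolding R_def using yy axf by auto
        then show False using I unfolding indep_def a_def b_def by blast
      qed
    qed
    have "card (R x \<union> R (f x)) \<le> b div 2" by (rule alphaC[OF a3(2) ind])
    moreover have "card (R x \<union> R (f x)) = card (R x) + card (R (f x))"
      using disj finR by (simp add: card_Un_disjoint)
    ultimately show ?thesis unfolding b_def by simp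
  qed
  have "(\<Sum>x<a. card (R (f x))) = (\<Sum>x<a. card (R x))"
  proof -
    have "(\<Sum>x<a. card (R (f x))) = (\<Sum>y\<in>f ` {..<a}. card (R y))"
      using inj by (simp add: sum.reindex)
    then show ?thesis using fim by simp
  qed
  then have "2 * card I = (\<Sum>x<a. card (R x) + card (R (f x)))" using cI by (simp add: sum.distrib)
  also have "\<dots> \<le> (\<Sum>x<a. k)" by (rule sum_mono) (use pair in auto)
  also have "\<dots> = (2*j+1) * k" unfolding a_def by simp
  finally have "2 * card I \<le> 2 * (j * k) + k" by (simp add: algebra_simps)
  then show ?thesis by linarith
qed

lemma part6:
  assumes "1 \<le> k" "k \<le> j"
  shows "Ccc (strong_prod (Cg (2 * j + 1)) (Cg (2 * k + 1))) = j * k + k div 2"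
proof (rule Ccc_strong[where ha=0 and hb=1 and ga=0 and Iz="Iodd j k"])
  show "card I \<le> j * k + k div 2" if "indep (strong_prod (Cg (2*j+1)) (Cg (2*k+1))) I" for I
    using odd_bound[OF _ _ that] assms by simp
  show "indep (strong_prod (Cg (2*j+1)) (Cg (2*k+1))) (Iodd j k)" using Iodd_indep assms by simp
  show "card (Iodd j k) = j * k + k div 2" using Iodd_card assms by simp
qed (use assms in \<open>auto simp: good_C\<close>)


theorem mainTheorem15:
  fixes j k m n :: nat
  shows
   "(2 \<le> m \<and> 2 \<le> n \<longrightarrow>
       Ccc (strong_prod (Kg m) (Kg n)) = 1 \<and> Ccc (lexic_prod (Kg m) (Kg n)) = 1) \<and>
    (2 \<le> m \<and> 3 \<le> n \<longrightarrow>
       Ccc (strong_prod (Kg m) (Cg n)) = n div 2 \<and> Ccc (lexic_prod (Kg m) (Cg n)) = n div 2) \<and>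
    (2 \<le> m \<and> 2 \<le> n \<longrightarrow>
       Ccc (strong_prod (Kg m) (Pg n)) = (n + 1) div 2 \<and>
       Ccc (lexic_prod (Kg m) (Pg n)) = (n + 1) div 2) \<and>
    (3 \<le> m \<and> 3 \<le> n \<longrightarrow>
       Ccc (lexic_prod (Cg m) (Cg n)) = (m div 2) * (n div 2)) \<and>
    (3 \<le> 2 * j \<and> 3 \<le> n \<longrightarrow>
       Ccc (strong_prod (Cg (2 * j)) (Cg n)) = j * (n div 2)) \<and>
    (1 \<le> k \<and> k \<le> j \<longrightarrow>
       Ccc (strong_prod (Cg (2 * j + 1)) (Cg (2 * k + 1))) = j * k + k div 2) \<and>
    (3 \<le> m \<and> 2 \<le> n \<longrightarrow>
       Ccc (strong_prod (Cg m) (Pg n)) = (m div 2) * ((n + 1) div 2) \<and>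
       Ccc (lexic_prod (Cg m) (Pg n)) = (m div 2) * ((n + 1) div 2)) \<and>
    (2 \<le> m \<and> 2 \<le> n \<longrightarrow>
       Ccc (strong_prod (Pg m) (Pg n)) = ((m + 1) div 2) * ((n + 1) div 2) \<and>
       Ccc (lexic_prod (Pg m) (Pg n)) = ((m + 1) div 2) * ((n + 1) div 2))"
  using part1[of m n] part2[of m n] part3[of m n] part4[of m n] part5[of j n] part6[of k j]
    part7[of m n] part8[of m n] by blast

end
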